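(* Let $c_1(\alpha)=\psi(\alpha)$ and $c_2(\alpha)=2\int_0^\infty \ln(z)G_\alpha(z)g_\alpha(z)\,dz$. For estimating $H_S(\underline\theta)$ under squared error loss: (1) every estimator $\delta_c$ with $c\in[c_1(\alpha),c_2(\alpha)]$ is admissible within the class $\mathcal K_1$; (2) every estimator $\delta_c$ with $c\in(-\infty,c_1(\alpha))\cup(c_2(\alpha),\infty)$ is inadmissible; (3) if $-\infty<d<c\le c_1(\alpha)$ or $c_2(\alpha)\le c<d<\infty$, then $R_\mu(\delta_c)<R_\mu(\delta_d)$ for all $\mu\ge1$.
   Context: Fix a known $\alpha>0$. $X_1,X_2$ are independent, $X_i$ having density $f(x\mid\theta_i)=\frac{x^{\alpha-1}e^{-x/\theta_i}}{\Gamma(\alpha)\theta_i^{\alpha}}$, $x>0$, with unknown $\underline\theta=(\theta_1,\theta_2)\in\Theta=(0,\infty)^2$. $Z_1=\min\{X_1,X_2\}$, $Z_2=\max\{X_1,X_2\}$. $H_S(\underline\theta)=\ln\theta_1\, I(X_1\ge X_2)+\ln\theta_2\, I(X_1<X_2)$. $\psi$ is the digamma function; $G_\alpha,g_\alpha$ are the distribution function and density of the gamma distribution with shape $\alpha$, scale $1$. For $c\in\mathbb R$, $\delta_c(X_1,X_2)=\ln Z_2-c$, and $\mathcal K_1=\{\delta_c:c\in\mathbb R\}$. The risk of an estimator $\delta$ is $R(\underline\theta,\delta)=\mathbb E_{\underline\theta}(\delta(X_1,X_2)-H_S(\underline\theta))^2$; for $\delta_c$ it depends on $\underline\theta$ only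 through $\mu=\max\{\theta_1,\theta_2\}/\min\{\theta_1,\theta_2\}\ge1$ and is written $R_\mu(\delta_c)$. An estimator $\delta'$ dominates $\delta$ if $R(\underline\theta,\delta')\le R(\underline\theta,\delta)$ for all $\underline\theta$ with strict inequality for some $\underline\theta$; $\delta$ is inadmissible if some estimator dominates it, and $\delta\in\mathcal K_1$ is admissible within $\mathcal K_1$ if no member of $\mathcal K_1$ dominates it. *)

theory Defs
  imports "HOL-Probability.Probability"
begin

definition gamma_dens :: "real \<Rightarrow> real \<Rightarrow> real \<Rightarrow> real" where
  "gamma_dens a th x = (if x > 0 then x powr (a - 1) * exp (- x / th) / (Gamma a * th powr a) else 0)"

definition g_std :: "real \<Rightarrow> real \<Rightarrow> real" where
  "g_std a z = gamma_dens a 1 z"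

definition G_std :: "real \<Rightarrow> real \<Rightarrow> real" where
  "G_std a z = (\<integral>t\<in>{..z}. g_std a t \<partial>lborel)"

definition c1 :: "real \<Rightarrow> real" where
  "c1 a = Digamma a"

definition c2 :: "real \<Rightarrow> real" where
  "c2 a = 2 * (\<integral>z\<in>{0<..}. ln z * G_std a z * g_std a z \<partial>lborel)"

definition H_S :: "real \<times> real \<Rightarrow> real \<times> real \<Rightarrow> real" where
  "H_S th x = (if fst x \<ge> snd x then ln (fst th) else ln (snd th))"

definition delta :: "real \<Rightarrow> real \<times> real \<Rightarrow> real" where
  "delta c x = ln (max (fst x) (snd x)) - c"

definition Theta :: "(real \<times> real) set" where
  "Theta = {0<..} \<times> {0<..}"

text \<open>Risk under squared error loss (as an extended nonnegative real, so it is
  always defined); the joint density of (X1,X2) w.r.t. Lebesgue measure on R^2.\<close>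
definition risk :: "real \<Rightarrow> real \<times> real \<Rightarrow> (real \<times> real \<Rightarrow> real) \<Rightarrow> ennreal" where
  "risk a th d = (\<integral>\<^sup>+ x. ennreal (gamma_dens a (fst th) (fst x) * gamma_dens a (snd th) (snd x)
                         * (d x - H_S th x)\<^sup>2) \<partial>lborel)"

definition dominates :: "real \<Rightarrow> (real \<times> real \<Rightarrow> real) \<Rightarrow> (real \<times> real \<Rightarrow> real) \<Rightarrow> bool" where
  "dominates a d' d \<longleftrightarrow> (\<forall>th\<in>Theta. risk a th d' \<le> risk a th d) \<and> (\<exists>th\<in>Theta. risk a th d' < risk a th d)"

definition inadmissible :: "real \<Rightarrow> (real \<times> real \<Rightarrow> real) \<Rightarrow> bool" where
  "inadmissible a d \<longleftrightarrow> (\<exists>d' \<in> borel_measurable borel. dominates a d' d)"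

definition admissible_within_K1 :: "real \<Rightarrow> real \<Rightarrow> bool" where
  "admissible_within_K1 a c \<longleftrightarrow> \<not> (\<exists>c'. dominates a (delta c') (delta c))"

end

theory Submission
  imports Defs
begin

definition kf :: "real \<Rightarrow> real \<Rightarrow> real" where
  "kf s t = (if t > 0 then t powr (s - 1) * exp (- t) else 0)"

lemma kf_meas[measurable]: "kf s \<in> borel_measurable borel"
  unfolding kf_def by measurable

lemma kf_nonneg: "kf s t \<ge> 0" unfolding kf_def by auto

lemma kf_hasint: assumes "s > 0" shows "has_bochner_integral lborel (kf s) (Gamma s)"
proof (rule has_bochner_integral_nn_integral)
  show "kf s \<in> borel_measurable lborel" by simp
  show "AE x in lborel. 0 \<le> kf s x" by (simp add: kf_nonneg)
  show "0 \<le> Gamma s" using assms by (simp add: less_imp_le)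
  have "(\<integral>\<^sup>+x. ennreal (kf s x) \<partial>lborel) =
        (\<integral>\<^sup>+t. ennreal (indicator {0..} t * t powr (s - 1) / exp t) \<partial>lborel)"
    by (intro nn_integral_cong) (auto simp: kf_def exp_minus field_simps indicator_def)
  also have "\<dots> = Gamma s" using Gamma_conv_nn_integral_real[OF assms] by simp
  finally show "(\<integral>\<^sup>+x. ennreal (kf s x) \<partial>lborel) = ennreal (Gamma s)" .
qed

lemma kf_int: "s > 0 \<Longrightarrow> integrable lborel (kf s)"
  by (rule integrable.intros[OF kf_hasint])

lemma kf_integral: "s > 0 \<Longrightarrow> integral\<^sup>L lborel (kf s) = Gamma s"
  by (rule has_bochner_integral_integral_eq[OF kf_hasint])

lemma kf_powr: "t > 0 \<Longrightarrow> kf s t * t powr e = kf (s + e) t"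
  by (simp add: kf_def powr_add[symmetric] algebra_simps)

lemma g_kf: "g_std a t = kf a t / Gamma a"
  by (simp add: g_std_def gamma_dens_def kf_def)

lemma ln_bound: fixes t b :: real assumes "t > 0" "b > 0" shows "\<bar>ln t\<bar> \<le> t powr (-b) / b + t"
proof (cases "t \<ge> 1")
  case True
  then have "ln t \<le> t - 1" using ln_le_minus_one[of t] assms(1) by linarith
  moreover have "ln t \<ge> 0" using True by simp
  moreover have "t powr (-b) / b \<ge> 0" using assms by (intro divide_nonneg_pos) auto
  ultimately show ?thesis by linarith
next
  case False
  define u where "u = - ln t"
  have u: "u > 0" using False assms by (simp add: u_def)
  have "t powr (-b) = exp (b * u)" using assms by (simp add: powr_def u_def)
  moreover have "exp (b*u) \<ge> 1 + b*u" by (rule exp_ge_add_one_self)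
  ultimately have "t powr (-b) \<ge> b * u" by linarith
  then have "u \<le> t powr (-b) / b" using assms by (simp add: field_simps)
  then show ?thesis using u assms by (simp add: u_def)
qed

lemma ln2_bound: fixes t b :: real assumes "t > 0" "b > 0"
  shows "(ln t)^2 \<le> 2 / b^2 * t powr (-2*b) + 2 * t powr 2"
proof -
  define X where "X = t powr (-b) / b"
  have X: "X \<ge> 0" using assms unfolding X_def by (intro divide_nonneg_pos) auto
  have h: "\<bar>ln t\<bar> \<le> X + t" using ln_bound[OF assms] by (simp add: X_def)
  have "(ln t)^2 = \<bar>ln t\<bar>^2" by simp
  also have "\<dots> \<le> (X + t)^2" using h by (intro power_mono) auto
  also have "\<dots> \<le> 2 * X^2 + 2 * t^2"
  proof -
    have "(X + t)^2 + (X - t)^2 = 2 * X^2 + 2 * t^2" by (simp add: power2_eq_square algebra_simps)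
    moreover have "0 \<le> (X - t)^2" by simp
    ultimately show ?thesis by linarith
  qed
  also have "X^2 = t powr (-2*b) / b^2"
    using assms by (simp add: X_def power2_eq_square powr_add[symmetric])
  also have "t^2 = t powr 2" using assms by (simp add: powr_realpow)
  finally show ?thesis by simp
qed

lemma lnw_bound: fixes t b :: real assumes "t > 0" "b > 0"
  shows "\<bar>ln t\<bar> * (1 + t) \<le> t powr (-b) / b + t powr (1 - b) / b + t powr 1 + t powr 2"
proof -
  define X where "X = t powr (-b) / b"
  have h: "\<bar>ln t\<bar> \<le> X + t" using ln_bound[OF assms] by (simp add: X_def)
  have "\<bar>ln t\<bar> * (1 + t) \<le> (X + t) * (1 + t)" by (rule mult_right_mono[OF h]) (use assms in simp)
  also have "\<dots> = X + X * t + t + t * t" by (simp add: algebra_simps)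
  also have "X * t = t powr (1 - b) / b" using assms
    by (simp add: X_def powr_diff powr_minus field_simps)
  also have "t * t = t powr 2" using assms by (simp add: powr_realpow power2_eq_square[symmetric])
  finally show ?thesis using assms by (simp add: X_def)
qed

context fixes a :: real assumes apos: "a > 0"
begin

lemma g_meas[measurable]: "g_std a \<in> borel_measurable borel"
  unfolding g_std_def gamma_dens_def by measurable

lemma g_nonneg: "g_std a t \<ge> 0" using apos by (simp add: g_kf kf_nonneg)

lemma g_zero: "t \<le> 0 \<Longrightarrow> g_std a t = 0" by (simp add: g_std_def gamma_dens_def)

lemma g_int: "integrable lborel (g_std a)"
  unfolding g_kf using kf_int[OF apos] by simp

lemma g_integral: "integral\<^sup>L lborel (g_std a) = 1"
  unfolding g_kf using kf_integral[OF apos] Gamma_real_pos[OF apos] by simp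

lemma g_ln2_int: "integrable lborel (\<lambda>t. g_std a t * (ln t)^2)"
proof (rule Bochner_Integration.integrable_bound)
  define b where "b = a / 4"
  have b: "b > 0" using apos by (simp add: b_def)
  show "integrable lborel (\<lambda>t. (2 / b^2 * kf (a - 2*b) t + 2 * kf (a + 2) t) / Gamma a)"
    using kf_int[of "a/2"] kf_int[of "a+2"] apos by (simp add: b_def)
  show "(\<lambda>t. g_std a t * (ln t)^2) \<in> borel_measurable lborel" by measurable
  show "AE x in lborel. norm (g_std a x * (ln x)^2) \<le> norm ((2 / b^2 * kf (a - 2*b) x + 2 * kf (a + 2) x) / Gamma a)"
  proof (intro AE_I2)
    fix t :: real
    have G: "Gamma a > 0" using apos by simp
    have R: "(2 / b^2 * kf (a - 2*b) t + 2 * kf (a + 2) t) / Gamma a \<ge> 0"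
      using G b by (intro divide_nonneg_pos add_nonneg_nonneg mult_nonneg_nonneg) (auto simp: kf_nonneg)
    show "norm (g_std a t * (ln t)^2) \<le> norm ((2 / b^2 * kf (a - 2*b) t + 2 * kf (a + 2) t) / Gamma a)"
    proof (cases "t > 0")
      case False then show ?thesis using R by (simp add: g_zero)
    next
      case True
      have "g_std a t * (ln t)^2 \<le> kf a t / Gamma a * (2 / b^2 * t powr (-2*b) + 2 * t powr 2)"
        unfolding g_kf using ln2_bound[OF True b] G by (intro mult_left_mono) (auto simp: kf_nonneg)
      also have "\<dots> = (2 / b^2 * (kf a t * t powr (-2*b)) + 2 * (kf a t * t powr 2)) / Gamma a"
        using G b by (simp add: field_simps)
      also have "\<dots> = (2 / b^2 * kf (a - 2*b) t + 2 * kf (a + 2) t) / Gamma a"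
        by (simp only: kf_powr[OF True]) simp
      finally have "g_std a t * (ln t)^2 \<le> (2 / b^2 * kf (a - 2*b) t + 2 * kf (a + 2) t) / Gamma a" .
      then show ?thesis
        by (simp only: real_norm_def abs_of_nonneg[OF R] abs_of_nonneg[OF mult_nonneg_nonneg[OF g_nonneg zero_le_power2]])
    qed
  qed
qed

lemma g_lnw_int: "integrable lborel (\<lambda>t. g_std a t * (\<bar>ln t\<bar> * (1 + t)))"
proof (rule Bochner_Integration.integrable_bound)
  define b where "b = a / 2"
  have b: "b > 0" using apos by (simp add: b_def)
  define F where "F t = (kf (a - b) t / b + kf (a + (1 - b)) t / b + kf (a + 1) t + kf (a + 2) t) / Gamma a" for t
  show "integrable lborel F"
    unfolding F_def using kf_int[of "a/2"] kf_int[of "a/2+1"] kf_int[of "a+1"] kf_int[of "a+2"] apos by (simp add: b_def)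
  show "(\<lambda>t. g_std a t * (\<bar>ln t\<bar> * (1 + t))) \<in> borel_measurable lborel" by measurable
  show "AE x in lborel. norm (g_std a x * (\<bar>ln x\<bar> * (1 + x))) \<le> norm (F x)"
  proof (intro AE_I2)
    fix t :: real
    have G: "Gamma a > 0" using apos by simp
    have R: "F t \<ge> 0"
      using G b unfolding F_def by (intro divide_nonneg_pos add_nonneg_nonneg divide_nonneg_pos) (auto simp: kf_nonneg)
    show "norm (g_std a t * (\<bar>ln t\<bar> * (1 + t))) \<le> norm (F t)"
    proof (cases "t > 0")
      case False then show ?thesis using R by (simp add: g_zero)
    next
      case True
      have "g_std a t * (\<bar>ln t\<bar> * (1 + t)) \<le> kf a t / Gamma a * (t powr (-b) / b + t powr (1 - b) / b + t powr 1 + t powr 2)"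
        unfolding g_kf using lnw_bound[OF True b] G by (intro mult_left_mono) (auto simp: kf_nonneg)
      also have "\<dots> = ((kf a t * t powr (-b)) / b + (kf a t * t powr (1 - b)) / b + kf a t * t powr 1 + kf a t * t powr 2) / Gamma a"
        by (simp add: algebra_simps add_divide_distrib)
      also have "\<dots> = F t"
        unfolding F_def by (simp only: kf_powr[OF True]) simp
      finally show ?thesis using R g_nonneg[of t] True by simp
    qed
  qed
qed

lemma g_ln_int: "integrable lborel (\<lambda>t. g_std a t * ln t)"
proof (rule Bochner_Integration.integrable_bound[OF g_lnw_int])
  show "(\<lambda>t. g_std a t * ln t) \<in> borel_measurable lborel" by measurable
  show "AE x in lborel. norm (g_std a x * ln x) \<le> norm (g_std a x * (\<bar>ln x\<bar> * (1 + x)))"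
  proof (intro AE_I2)
    fix t :: real
    show "norm (g_std a t * ln t) \<le> norm (g_std a t * (\<bar>ln t\<bar> * (1 + t)))"
    proof (cases "t > 0")
      case False then show ?thesis by (simp add: g_zero)
    next
      case True
      have "\<bar>ln t\<bar> \<le> \<bar>ln t\<bar> * (1 + t)" using True by (simp add: mult_le_cancel_left1)
      then show ?thesis using g_nonneg[of t] True
        by (simp add: abs_mult mult_left_mono)
    qed
  qed
qed

end

lemma powr_diff_bound:
  fixes t h :: real assumes t: "t > 0" and h: "0 < h" "h \<le> 1"
  shows "\<bar>t powr h - 1\<bar> \<le> h * (\<bar>ln t\<bar> * (1 + t))"
proof -
  define L where "L = ln t"
  have tp: "t powr h = exp (h * L)" using t by (simp add: powr_def L_def)
  show ?thesis
  proof (cases "L \<ge> 0")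
    case True
    have e1: "1 - h * L \<le> exp (- (h * L))" using exp_ge_add_one_self[of "-(h*L)"] by simp
    have "exp (h * L) * (1 - h * L) \<le> exp (h * L) * exp (- (h * L))"
      by (rule mult_left_mono[OF e1]) simp
    also have "\<dots> = 1" by (simp add: exp_minus)
    finally have e2: "exp (h * L) - 1 \<le> h * L * exp (h * L)" by (simp add: algebra_simps)
    have "h * L \<le> L" using mult_left_le_one_le[of L h] True h by simp
    then have "exp (h * L) \<le> exp L" by simp
    also have "exp L = t" using t by (simp add: L_def)
    finally have e3: "exp (h * L) \<le> t" .
    have "h * L * exp (h * L) \<le> h * L * t" using e3 True h by (intro mult_left_mono) auto
    also have "\<dots> \<le> h * (L * (1 + t))" using True h t by (simp add: algebra_simps)
    finally have "exp (h * L) - 1 \<le> h * (L * (1 + t))" using e2 by linarith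
    moreover have "exp (h * L) \<ge> 1" using True h by simp
    ultimately show ?thesis using True by (simp add: tp L_def[symmetric])
  next
    case False
    have e1: "1 + h * L \<le> exp (h * L)" by (rule exp_ge_add_one_self)
    have E: "exp (h * L) \<le> 1" using False h by (simp add: mult_nonneg_nonpos)
    have "- (h * L) \<le> h * (- L * (1 + t))"
    proof -
      have "- L \<le> - L * (1 + t)" using False t by (simp add: mult_le_cancel_left1)
      then show ?thesis using h by (simp add: mult_left_mono)
    qed
    note M = this
    have A: "\<bar>exp (h*L) - 1\<bar> = 1 - exp (h*L)" using E by simp
    have "\<bar>exp (h*L) - 1\<bar> \<le> h * (- L * (1 + t))" unfolding A using e1 M by linarith
    moreover have "\<bar>L\<bar> = - L" using False by simp
    ultimately show ?thesis by (simp add: tp L_def[symmetric])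
  qed
qed

lemma nz_inv: "inverse (real (Suc n)) \<noteq> 0" by simp

lemma powr_quot_lim:
  fixes t :: real assumes t: "t > 0"
  shows "(\<lambda>n. (t powr (inverse (real (Suc n))) - 1) / inverse (real (Suc n))) \<longlonglongrightarrow> ln t"
proof -
  have D0: "((\<lambda>h. h * ln t) has_real_derivative 1 * ln t) (at 0)"
    by (rule DERIV_cmult_right[OF DERIV_ident])
  have D1: "((\<lambda>h. exp (h * ln t)) has_real_derivative exp (0 * ln t) * (1 * ln t)) (at 0)"
    by (rule DERIV_chain2[OF DERIV_exp D0])
  have D: "((\<lambda>h. exp (h * ln t)) has_real_derivative ln t) (at 0)"
    using D1 by simp
  then have "((\<lambda>h. (exp ((0 + h) * ln t) - exp (0 * ln t)) / h) \<longlongrightarrow> ln t) (at 0)"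
    unfolding DERIV_def .
  then have L: "((\<lambda>h. (t powr h - 1) / h) \<longlongrightarrow> ln t) (at 0)"
    using t by (simp add: powr_def)
  have F: "filterlim (\<lambda>n. inverse (real (Suc n))) (at 0) sequentially"
    unfolding filterlim_at using LIMSEQ_inverse_real_of_nat nz_inv by auto
  show ?thesis by (rule filterlim_compose[OF L F])
qed

context fixes a :: real assumes apos: "a > 0"
begin

lemma g_ln_integral: "integral\<^sup>L lborel (\<lambda>t. g_std a t * ln t) = Digamma a"
proof -
  define h where "h n = inverse (real (Suc n))" for n
  have hpos: "0 < h n" "h n \<le> 1" for n by (auto simp: h_def field_simps)
  define s where "s n t = g_std a t * ((t powr h n - 1) / h n)" for n t
  have G: "Gamma a > 0" using apos by simp
  have lim1: "(\<lambda>n. integral\<^sup>L lborel (s n)) \<longlonglongrightarrow> integral\<^sup>L lborel (\<lambda>t. g_std a t * ln t)"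
  proof (rule integral_dominated_convergence[where w="\<lambda>t. g_std a t * (\<bar>ln t\<bar> * (1 + t))"])
    show "(\<lambda>t. g_std a t * ln t) \<in> borel_measurable lborel" using apos by measurable
    show "s n \<in> borel_measurable lborel" for n unfolding s_def using apos by measurable
    show "integrable lborel (\<lambda>t. g_std a t * (\<bar>ln t\<bar> * (1 + t)))" by (rule g_lnw_int[OF apos])
    show "AE t in lborel. (\<lambda>n. s n t) \<longlonglongrightarrow> g_std a t * ln t"
    proof (intro AE_I2)
      fix t :: real
      show "(\<lambda>n. s n t) \<longlonglongrightarrow> g_std a t * ln t"
      proof (cases "t > 0")
        case True
        show ?thesis unfolding s_def h_def by (intro tendsto_mult tendsto_const powr_quot_lim True)
      next
        case False then show ?thesis by (simp add: s_def g_zero[OF apos])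
      qed
    qed
    show "AE t in lborel. norm (s n t) \<le> g_std a t * (\<bar>ln t\<bar> * (1 + t))" for n
    proof (intro AE_I2)
      fix t :: real
      show "norm (s n t) \<le> g_std a t * (\<bar>ln t\<bar> * (1 + t))"
      proof (cases "t > 0")
        case True
        have "\<bar>(t powr h n - 1) / h n\<bar> \<le> \<bar>ln t\<bar> * (1 + t)"
          using powr_diff_bound[OF True hpos(1)[of n] hpos(2)[of n]] hpos(1)[of n]
          by (simp add: abs_divide divide_le_eq mult.commute)
        then have "g_std a t * \<bar>(t powr h n - 1) / h n\<bar> \<le> g_std a t * (\<bar>ln t\<bar> * (1 + t))"
          by (rule mult_left_mono[OF _ g_nonneg[OF apos]])
        then show ?thesis unfolding s_def
          by (simp only: real_norm_def abs_mult abs_of_nonneg[OF g_nonneg[OF apos]])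
      next
        case False then show ?thesis by (simp add: s_def g_zero[OF apos])
      qed
    qed
  qed
  have sint: "integral\<^sup>L lborel (s n) = ((Gamma (a + h n) - Gamma a) / h n) / Gamma a" for n
  proof -
    have "s n = (\<lambda>t. (kf (a + h n) t / Gamma a - g_std a t) / h n)"
    proof
      fix t :: real
      show "s n t = (kf (a + h n) t / Gamma a - g_std a t) / h n"
      proof (cases "t > 0")
        case True
        then show ?thesis unfolding s_def g_kf using kf_powr[OF True, of a "h n"]
          by (simp add: algebra_simps diff_divide_distrib)
      next
        case False then show ?thesis by (simp add: s_def g_zero[OF apos] kf_def)
      qed
    qed
    then have "integral\<^sup>L lborel (s n) = (Gamma (a + h n) / Gamma a - 1) / h n"
      using kf_int[of "a + h n"] kf_integral[of "a + h n"] g_int[OF apos] g_integral[OF apos] apos hpos(1)[of n]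
      by simp
    also have "\<dots> = ((Gamma (a + h n) - Gamma a) / h n) / Gamma a"
      using G hpos(1)[of n] by (simp add: field_simps)
    finally show ?thesis .
  qed
  have lim2: "(\<lambda>n. integral\<^sup>L lborel (s n)) \<longlonglongrightarrow> Digamma a"
  proof -
    have nz: "a \<notin> \<int>\<^sub>\<le>\<^sub>0" using apos by (auto elim!: nonpos_Ints_cases)
    have D: "(Gamma has_real_derivative Gamma a * Digamma a) (at a)"
      by (rule has_field_derivative_Gamma[OF nz])
    then have L: "((\<lambda>x. (Gamma (a + x) - Gamma a) / x) \<longlongrightarrow> Gamma a * Digamma a) (at 0)"
      unfolding DERIV_def .
    have F: "filterlim h (at 0) sequentially"
      unfolding filterlim_at h_def using LIMSEQ_inverse_real_of_nat nz_inv by auto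
    have "(\<lambda>n. ((Gamma (a + h n) - Gamma a) / h n) / Gamma a) \<longlonglongrightarrow> (Gamma a * Digamma a) / Gamma a"
      by (intro tendsto_divide tendsto_const filterlim_compose[OF L F]) (use G in simp)
    then show ?thesis using G by (simp add: sint)
  qed
  show ?thesis using LIMSEQ_unique[OF lim1 lim2] .
qed

end

abbreviation NN :: "(real \<times> real) measure" where "NN \<equiv> lborel \<Otimes>\<^sub>M lborel"

lemma prod_int:
  fixes f1 f2 :: "real \<Rightarrow> real"
  assumes i1: "integrable lborel f1" and i2: "integrable lborel f2"
  shows "integrable NN (\<lambda>y. f1 (fst y) * f2 (snd y))"
proof -
  have m1[measurable]: "f1 \<in> borel_measurable borel" using borel_measurable_integrable[OF i1] by simp
  have m2[measurable]: "f2 \<in> borel_measurable borel" using borel_measurable_integrable[OF i2] by simp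
  have "integrable NN (\<lambda>(x, y). f1 x * f2 y)"
  proof (rule lborel_pair.Fubini_integrable)
    show "(\<lambda>(x, y). f1 x * f2 y) \<in> borel_measurable NN" by measurable
    have e: "(\<lambda>x. \<integral>y. norm (case (x, y) of (x, y) \<Rightarrow> f1 x * f2 y) \<partial>lborel) = (\<lambda>x. \<bar>f1 x\<bar> * (\<integral>y. \<bar>f2 y\<bar> \<partial>lborel))"
      by (simp add: abs_mult)
    show "integrable lborel (\<lambda>x. \<integral>y. norm (case (x, y) of (x, y) \<Rightarrow> f1 x * f2 y) \<partial>lborel)"
      unfolding e using i1 by (intro integrable_mult_left integrable_abs) simp
    show "AE x in lborel. integrable lborel (\<lambda>y. case (x, y) of (x, y) \<Rightarrow> f1 x * f2 y)"
      using i2 by simp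
  qed
  then show ?thesis by (simp add: case_prod_beta')
qed

lemma prod_integral:
  fixes f1 f2 :: "real \<Rightarrow> real"
  assumes i1: "integrable lborel f1" and i2: "integrable lborel f2"
  shows "integral\<^sup>L NN (\<lambda>y. f1 (fst y) * f2 (snd y)) = integral\<^sup>L lborel f1 * integral\<^sup>L lborel f2"
proof -
  have "integral\<^sup>L NN (\<lambda>y. f1 (fst y) * f2 (snd y)) = (\<integral>x. (\<integral>y. f1 x * f2 y \<partial>lborel) \<partial>lborel)"
    using lborel_pair.integral_fst'[OF prod_int[OF i1 i2]] by simp
  also have "\<dots> = (\<integral>x. f1 x * integral\<^sup>L lborel f2 \<partial>lborel)" by simp
  also have "\<dots> = integral\<^sup>L lborel f1 * integral\<^sup>L lborel f2" by simp
  finally show ?thesis .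
qed

lemma gd_scale:
  assumes th: "th > 0" shows "th * gamma_dens a th (th * y) = g_std a y"
proof (cases "y > 0")
  case True
  have "(th * y) powr (a - 1) = th powr (a - 1) * y powr (a - 1)"
    using True th by (simp add: powr_mult)
  moreover have "th powr a = th powr (a - 1) * th" using th
    by (simp add: powr_diff)
  moreover have "th powr (a - 1) > 0" using th by simp
  ultimately show ?thesis using True th
    by (simp add: gamma_dens_def g_std_def field_simps)
next
  case False
  then have "\<not> th * y > 0" using th by (simp add: zero_less_mult_iff)
  then show ?thesis using False by (simp add: gamma_dens_def g_std_def)
qed

lemma scale1:
  fixes \<phi> :: "real \<Rightarrow> real"
  assumes th: "th > 0" and m[measurable]: "\<phi> \<in> borel_measurable borel"
  shows "(\<integral>\<^sup>+x. ennreal (gamma_dens a th x * \<phi> x) \<partial>lborel) = (\<integral>\<^sup>+y. ennreal (g_std a y * \<phi> (th * y)) \<partial>lborel)"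
proof -
  have gm[measurable]: "gamma_dens a th \<in> borel_measurable borel"
    unfolding gamma_dens_def by measurable
  have "(\<integral>\<^sup>+x. ennreal (gamma_dens a th x * \<phi> x) \<partial>lborel)
      = \<bar>th\<bar> * (\<integral>\<^sup>+y. ennreal (gamma_dens a th (0 + th * y) * \<phi> (0 + th * y)) \<partial>lborel)"
    by (rule nn_integral_real_affine) (use th in auto)
  also have "\<dots> = (\<integral>\<^sup>+y. ennreal th * ennreal (gamma_dens a th (th * y) * \<phi> (th * y)) \<partial>lborel)"
    using th by (subst nn_integral_cmult) auto
  also have "\<dots> = (\<integral>\<^sup>+y. ennreal (g_std a y * \<phi> (th * y)) \<partial>lborel)"
  proof (rule nn_integral_cong)
    fix y
    have "ennreal th * ennreal (gamma_dens a th (th * y) * \<phi> (th * y))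
        = ennreal (th * (gamma_dens a th (th * y) * \<phi> (th * y)))"
      using th by (simp add: ennreal_mult')
    also have "th * (gamma_dens a th (th * y) * \<phi> (th * y)) = g_std a y * \<phi> (th * y)"
      using gd_scale[OF th, of a y] by (simp add: mult.assoc[symmetric])
    finally show "ennreal th * ennreal (gamma_dens a th (th * y) * \<phi> (th * y)) = ennreal (g_std a y * \<phi> (th * y))" .
  qed
  finally show ?thesis .
qed

lemma risk_scale:
  fixes F :: "real \<times> real \<Rightarrow> real"
  assumes t1: "t1 > 0" and t2: "t2 > 0" and Fm[measurable]: "F \<in> borel_measurable NN"
  shows "(\<integral>\<^sup>+x. ennreal (gamma_dens a t1 (fst x) * gamma_dens a t2 (snd x) * F x) \<partial>lborel)
       = (\<integral>\<^sup>+y. ennreal (g_std a (fst y) * g_std a (snd y) * F (t1 * fst y, t2 * snd y)) \<partial>NN)"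
proof -
  have gm[measurable]: "gamma_dens a t \<in> borel_measurable borel" for t
    unfolding gamma_dens_def by measurable
  have gsm[measurable]: "g_std a \<in> borel_measurable borel"
    unfolding g_std_def by measurable
  have "(\<integral>\<^sup>+x. ennreal (gamma_dens a t1 (fst x) * gamma_dens a t2 (snd x) * F x) \<partial>lborel)
      = (\<integral>\<^sup>+x. ennreal (gamma_dens a t1 (fst x) * gamma_dens a t2 (snd x) * F x) \<partial>NN)"
    by (simp only: lborel_prod)
  also have "\<dots> = (\<integral>\<^sup>+x1. \<integral>\<^sup>+x2. ennreal (gamma_dens a t2 x2 * (gamma_dens a t1 x1 * F (x1, x2))) \<partial>lborel \<partial>lborel)"
    by (subst lborel.nn_integral_fst[symmetric]) (auto simp: mult_ac)
  also have "\<dots> = (\<integral>\<^sup>+x1. \<integral>\<^sup>+y2. ennreal (g_std a y2 * (gamma_dens a t1 x1 * F (x1, t2 * y2))) \<partial>lborel \<partial>lborel)"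
    by (intro nn_integral_cong scale1 t2) measurable
  also have "\<dots> = (\<integral>\<^sup>+y2. \<integral>\<^sup>+x1. ennreal (g_std a y2 * (gamma_dens a t1 x1 * F (x1, t2 * y2))) \<partial>lborel \<partial>lborel)"
  proof -
    have m: "(\<lambda>(x1,y2). ennreal (g_std a y2 * (gamma_dens a t1 x1 * F (x1, t2 * y2)))) \<in> borel_measurable NN"
      by measurable
    show ?thesis using lborel_pair.Fubini[OF m] by simp
  qed
  also have "\<dots> = (\<integral>\<^sup>+y2. \<integral>\<^sup>+x1. ennreal (gamma_dens a t1 x1 * (g_std a y2 * F (x1, t2 * y2))) \<partial>lborel \<partial>lborel)"
    by (simp add: mult_ac)
  also have "\<dots> = (\<integral>\<^sup>+y2. \<integral>\<^sup>+y1. ennreal (g_std a y1 * (g_std a y2 * F (t1 * y1, t2 * y2))) \<partial>lborel \<partial>lborel)"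
    by (intro nn_integral_cong scale1 t1) measurable
  also have "\<dots> = (\<integral>\<^sup>+y. ennreal (g_std a (fst y) * g_std a (snd y) * F (t1 * fst y, t2 * snd y)) \<partial>NN)"
    by (subst lborel_pair.nn_integral_snd[symmetric]) (auto simp: mult_ac)
  finally show ?thesis .
qed

definition qd :: "real \<Rightarrow> real \<times> real \<Rightarrow> real" where
  "qd a y = g_std a (fst y) * g_std a (snd y)"

definition Wf :: "real \<times> real \<Rightarrow> real \<times> real \<Rightarrow> real" where
  "Wf th y = (if fst th * fst y \<ge> snd th * snd y then ln (fst y) else ln (snd y))"

lemma Wf_meas[measurable]: "Wf th \<in> borel_measurable NN"
  unfolding Wf_def by measurable

lemma delta_meas[measurable]: "delta c \<in> borel_measurable NN"
  unfolding delta_def by measurable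

lemma H_S_meas[measurable]: "H_S th \<in> borel_measurable NN"
  unfolding H_S_def by measurable

context fixes a :: real assumes apos: "a > 0"
begin

lemma gsm[measurable]: "g_std a \<in> borel_measurable borel"
  unfolding g_std_def gamma_dens_def by measurable

lemma qd_meas[measurable]: "qd a \<in> borel_measurable NN"
  unfolding qd_def by measurable

lemma qd_nonneg: "qd a y \<ge> 0"
  unfolding qd_def using g_nonneg[OF apos] by simp

lemma qd_zero: "\<not> (fst y > 0 \<and> snd y > 0) \<Longrightarrow> qd a y = 0"
  unfolding qd_def using g_zero[OF apos] by auto

lemma risk_eq:
  assumes th: "th \<in> Theta"
  shows "risk a th (delta c) = (\<integral>\<^sup>+y. ennreal (qd a y * (Wf th y - c)^2) \<partial>NN)"
proof -
  obtain t1 t2 where tt: "th = (t1, t2)" "t1 > 0" "t2 > 0" using th by (cases th) (auto simp: Theta_def)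
  have Fm: "(\<lambda>x. (delta c x - H_S th x)^2) \<in> borel_measurable NN" by measurable
  have "risk a th (delta c) = (\<integral>\<^sup>+y. ennreal (g_std a (fst y) * g_std a (snd y) * (delta c (t1 * fst y, t2 * snd y) - H_S th (t1 * fst y, t2 * snd y))^2) \<partial>NN)"
    unfolding risk_def using risk_scale[OF tt(2) tt(3) Fm, of a] tt(1) by simp
  also have "\<dots> = (\<integral>\<^sup>+y. ennreal (qd a y * (Wf th y - c)^2) \<partial>NN)"
  proof (rule nn_integral_cong)
    fix y :: "real \<times> real"
    show "ennreal (g_std a (fst y) * g_std a (snd y) * (delta c (t1 * fst y, t2 * snd y) - H_S th (t1 * fst y, t2 * snd y))^2) = ennreal (qd a y * (Wf th y - c)^2)"
    proof (cases "fst y > 0 \<and> snd y > 0")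
      case False
      have z: "g_std a (fst y) * g_std a (snd y) = 0" using qd_zero[OF False] by (simp add: qd_def)
      show ?thesis unfolding qd_def by (simp only: z mult_zero_left)
    next
      case True
      have "delta c (t1 * fst y, t2 * snd y) - H_S th (t1 * fst y, t2 * snd y) = Wf th y - c"
        using True tt by (auto simp: delta_def H_S_def Wf_def max_def ln_mult)
      then show ?thesis by (simp add: qd_def)
    qed
  qed
  finally show ?thesis .
qed

lemma int_q: "integrable NN (qd a)" and integral_q: "integral\<^sup>L NN (qd a) = 1"
  using prod_int[OF g_int[OF apos] g_int[OF apos]] prod_integral[OF g_int[OF apos] g_int[OF apos]]
    g_integral[OF apos]
  by (simp_all add: qd_def[abs_def])

lemma int_ql1: "integrable NN (\<lambda>y. qd a y * ln (fst y))"
  and integral_ql1: "integral\<^sup>L NN (\<lambda>y. qd a y * ln (fst y)) = Digamma a"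
proof -
  have e: "(\<lambda>y. qd a y * ln (fst y)) = (\<lambda>y. (g_std a (fst y) * ln (fst y)) * g_std a (snd y))"
    by (auto simp: qd_def fun_eq_iff mult_ac)
  show "integrable NN (\<lambda>y. qd a y * ln (fst y))"
    unfolding e by (rule prod_int[OF g_ln_int[OF apos] g_int[OF apos]])
  show "integral\<^sup>L NN (\<lambda>y. qd a y * ln (fst y)) = Digamma a"
    unfolding e using prod_integral[OF g_ln_int[OF apos] g_int[OF apos]] g_ln_integral[OF apos] g_integral[OF apos]
    by simp
qed

lemma int_ql2: "integrable NN (\<lambda>y. qd a y * ln (snd y))"
  and integral_ql2: "integral\<^sup>L NN (\<lambda>y. qd a y * ln (snd y)) = Digamma a"
proof -
  have e: "(\<lambda>y. qd a y * ln (snd y)) = (\<lambda>y. g_std a (fst y) * (g_std a (snd y) * ln (snd y)))"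
    by (auto simp: qd_def fun_eq_iff mult_ac)
  show "integrable NN (\<lambda>y. qd a y * ln (snd y))"
    unfolding e by (rule prod_int[OF g_int[OF apos] g_ln_int[OF apos]])
  show "integral\<^sup>L NN (\<lambda>y. qd a y * ln (snd y)) = Digamma a"
    unfolding e using prod_integral[OF g_int[OF apos] g_ln_int[OF apos]] g_ln_integral[OF apos] g_integral[OF apos]
    by simp
qed

lemma int_qlsq1: "integrable NN (\<lambda>y. qd a y * (ln (fst y))^2)"
proof -
  have e: "(\<lambda>y. qd a y * (ln (fst y))^2) = (\<lambda>y. (g_std a (fst y) * (ln (fst y))^2) * g_std a (snd y))"
    by (auto simp: qd_def fun_eq_iff mult_ac)
  show ?thesis unfolding e by (rule prod_int[OF g_ln2_int[OF apos] g_int[OF apos]])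
qed

lemma int_qlsq2: "integrable NN (\<lambda>y. qd a y * (ln (snd y))^2)"
proof -
  have e: "(\<lambda>y. qd a y * (ln (snd y))^2) = (\<lambda>y. g_std a (fst y) * (g_std a (snd y) * (ln (snd y))^2))"
    by (auto simp: qd_def fun_eq_iff mult_ac)
  show ?thesis unfolding e by (rule prod_int[OF g_int[OF apos] g_ln2_int[OF apos]])
qed

lemma int_qabs: "integrable NN (\<lambda>y. \<bar>qd a y * ln (fst y)\<bar> + \<bar>qd a y * ln (snd y)\<bar>)"
  using int_ql1 int_ql2 by simp

lemma int_qW: "integrable NN (\<lambda>y. qd a y * Wf th y)"
proof (rule Bochner_Integration.integrable_bound[OF int_qabs])
  show "(\<lambda>y. qd a y * Wf th y) \<in> borel_measurable NN" by measurable
  show "AE y in NN. norm (qd a y * Wf th y) \<le> norm (\<bar>qd a y * ln (fst y)\<bar> + \<bar>qd a y * ln (snd y)\<bar>)"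
    by (intro AE_I2) (auto simp: Wf_def)
qed

lemma int_qWc: "integrable NN (\<lambda>y. qd a y * (Wf th y - c)^2)"
proof (rule Bochner_Integration.integrable_bound)
  show "integrable NN (\<lambda>y. 2 * (qd a y * (ln (fst y))^2) + 2 * (qd a y * (ln (snd y))^2) + 2 * c^2 * qd a y)"
    using int_qlsq1 int_qlsq2 int_q by simp
  show "(\<lambda>y. qd a y * (Wf th y - c)^2) \<in> borel_measurable NN" by measurable
  show "AE y in NN. norm (qd a y * (Wf th y - c)^2) \<le> norm (2 * (qd a y * (ln (fst y))^2) + 2 * (qd a y * (ln (snd y))^2) + 2 * c^2 * qd a y)"
  proof (intro AE_I2)
    fix y :: "real \<times> real"
    have q: "qd a y \<ge> 0" by (rule qd_nonneg)
    have w: "(Wf th y - c)^2 \<le> 2 * (ln (fst y))^2 + 2 * (ln (snd y))^2 + 2 * c^2"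
    proof -
      have "(Wf th y - c)^2 \<le> 2 * (Wf th y)^2 + 2 * c^2"
      proof -
        have "(Wf th y - c)^2 + (Wf th y + c)^2 = 2 * (Wf th y)^2 + 2 * c^2" by (simp add: power2_eq_square algebra_simps)
        moreover have "(Wf th y + c)^2 \<ge> 0" by simp
        ultimately show ?thesis by linarith
      qed
      moreover have "(Wf th y)^2 \<le> (ln (fst y))^2 + (ln (snd y))^2" by (auto simp: Wf_def)
      ultimately show ?thesis by linarith
    qed
    have "qd a y * (Wf th y - c)^2 \<le> qd a y * (2 * (ln (fst y))^2 + 2 * (ln (snd y))^2 + 2 * c^2)"
      by (rule mult_left_mono[OF w q])
    also have "\<dots> = 2 * (qd a y * (ln (fst y))^2) + 2 * (qd a y * (ln (snd y))^2) + 2 * c^2 * qd a y"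
      by (simp add: algebra_simps)
    finally have le: "qd a y * (Wf th y - c)^2 \<le> 2 * (qd a y * (ln (fst y))^2) + 2 * (qd a y * (ln (snd y))^2) + 2 * c^2 * qd a y" .
    have "0 \<le> qd a y * (Wf th y - c)^2" using q by simp
    then show "norm (qd a y * (Wf th y - c)^2) \<le> norm (2 * (qd a y * (ln (fst y))^2) + 2 * (qd a y * (ln (snd y))^2) + 2 * c^2 * qd a y)"
      using le by simp
  qed
qed

definition Rf :: "real \<times> real \<Rightarrow> real \<Rightarrow> real" where
  "Rf th c = integral\<^sup>L NN (\<lambda>y. qd a y * (Wf th y - c)^2)"

definition mf :: "real \<times> real \<Rightarrow> real" where
  "mf th = integral\<^sup>L NN (\<lambda>y. qd a y * Wf th y)"

lemma risk_Rf: "th \<in> Theta \<Longrightarrow> risk a th (delta c) = ennreal (Rf th c)"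
  unfolding risk_eq Rf_def
  by (rule nn_integral_eq_integral[OF int_qWc]) (simp add: qd_nonneg)

lemma Rf_nonneg: "Rf th c \<ge> 0"
  unfolding Rf_def by (rule integral_nonneg_AE) (simp add: qd_nonneg)

lemma Rf_diff: "Rf th c - Rf th d = (d - c) * (2 * mf th - c - d)"
proof -
  have "Rf th c - Rf th d = integral\<^sup>L NN (\<lambda>y. qd a y * (Wf th y - c)^2 - qd a y * (Wf th y - d)^2)"
    unfolding Rf_def by (rule Bochner_Integration.integral_diff[symmetric, OF int_qWc int_qWc])
  also have "(\<lambda>y. qd a y * (Wf th y - c)^2 - qd a y * (Wf th y - d)^2)
      = (\<lambda>y. (2 * (d - c)) * (qd a y * Wf th y) - (d - c) * (c + d) * qd a y)"
    by (rule ext) (simp add: power2_eq_square algebra_simps)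
  also have "integral\<^sup>L NN \<dots> = (2 * (d - c)) * mf th - (d - c) * (c + d) * 1"
    unfolding mf_def using int_qW int_q integral_q
    by (subst Bochner_Integration.integral_diff) (auto)
  finally show ?thesis by (simp add: algebra_simps)
qed

end

context fixes a :: real assumes apos: "a > 0"
begin

lemma mf_lower:
  assumes th: "th \<in> Theta" shows "Digamma a \<le> mf a th"
proof -
  obtain t1 t2 where tt: "th = (t1, t2)" "t1 > 0" "t2 > 0" using th by (cases th) (auto simp: Theta_def)
  show ?thesis
  proof (cases "t2 \<le> t1")
    case True
    have "integral\<^sup>L NN (\<lambda>y. qd a y * ln (fst y)) \<le> integral\<^sup>L NN (\<lambda>y. qd a y * Wf th y)"
    proof (rule integral_mono[OF int_ql1[OF apos] int_qW[OF apos]])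
      fix y :: "real \<times> real"
      show "qd a y * ln (fst y) \<le> qd a y * Wf th y"
      proof (cases "fst y > 0 \<and> snd y > 0")
        case False then show ?thesis using qd_zero[OF apos False] by simp
      next
        case pos: True
        have "ln (fst y) \<le> Wf th y"
        proof (cases "t1 * fst y \<ge> t2 * snd y")
          case True then show ?thesis by (simp add: Wf_def tt)
        next
          case False
          have "t2 * snd y \<le> t1 * snd y" using \<open>t2 \<le> t1\<close> pos by (simp add: mult_right_mono)
          then have "t1 * fst y < t1 * snd y" using False by linarith
          then have "fst y < snd y" using tt(2) by simp
          then show ?thesis using False pos by (simp add: Wf_def tt)
        qed
        then show ?thesis using qd_nonneg[OF apos] by (simp add: mult_left_mono)
      qed
    qed
    then show ?thesis using integral_ql1[OF apos] by (simp add: Submission.mf_def[OF apos])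
  next
    case False
    have "integral\<^sup>L NN (\<lambda>y. qd a y * ln (snd y)) \<le> integral\<^sup>L NN (\<lambda>y. qd a y * Wf th y)"
    proof (rule integral_mono[OF int_ql2[OF apos] int_qW[OF apos]])
      fix y :: "real \<times> real"
      show "qd a y * ln (snd y) \<le> qd a y * Wf th y"
      proof (cases "fst y > 0 \<and> snd y > 0")
        case False then show ?thesis using qd_zero[OF apos False] by simp
      next
        case pos: True
        have "ln (snd y) \<le> Wf th y"
        proof (cases "t1 * fst y \<ge> t2 * snd y")
          case True
          have "t1 * snd y < t2 * snd y" using \<open>\<not> t2 \<le> t1\<close> pos by simp
          then have "t1 * snd y < t1 * fst y" using True by linarith
          then have "snd y < fst y" using tt(2) by simp
          then show ?thesis using True pos by (simp add: Wf_def tt)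
        next
          case False then show ?thesis by (simp add: Wf_def tt)
        qed
        then show ?thesis using qd_nonneg[OF apos] by (simp add: mult_left_mono)
      qed
    qed
    then show ?thesis using integral_ql2[OF apos] by (simp add: Submission.mf_def[OF apos])
  qed
qed

lemma int_qmax: "integrable NN (\<lambda>y. qd a y * ln (max (fst y) (snd y)))"
proof (rule Bochner_Integration.integrable_bound[OF int_qabs[OF apos]])
  show "(\<lambda>y. qd a y * ln (max (fst y) (snd y))) \<in> borel_measurable NN" using apos by measurable
  show "AE y in NN. norm (qd a y * ln (max (fst y) (snd y))) \<le> norm (\<bar>qd a y * ln (fst y)\<bar> + \<bar>qd a y * ln (snd y)\<bar>)"
    by (intro AE_I2) (auto simp: max_def)
qed

definition C2 where "C2 = integral\<^sup>L NN (\<lambda>y. qd a y * ln (max (fst y) (snd y)))"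

lemma mf_upper: "mf a th \<le> C2"
  unfolding Submission.mf_def[OF apos] C2_def
proof (rule integral_mono[OF int_qW[OF apos] int_qmax])
  fix y :: "real \<times> real"
  show "qd a y * Wf th y \<le> qd a y * ln (max (fst y) (snd y))"
  proof (cases "fst y > 0 \<and> snd y > 0")
    case False then show ?thesis using qd_zero[OF apos False] by simp
  next
    case True
    have "Wf th y \<le> ln (max (fst y) (snd y))" using True
      by (auto simp: Wf_def max_def)
    then show ?thesis using qd_nonneg[OF apos] by (simp add: mult_left_mono)
  qed
qed

lemma mf_11: "mf a (1, 1) = C2"
  unfolding Submission.mf_def[OF apos] C2_def
  by (rule arg_cong[where f="integral\<^sup>L NN"]) (auto simp: Wf_def max_def fun_eq_iff)


lemma G_eq: "G_std a x = (\<integral>y. indicator {..x} y * g_std a y \<partial>lborel)"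
  unfolding G_std_def set_lebesgue_integral_def by simp

lemma G_eq': "G_std a x = (\<integral>y. indicator {..<x} y * g_std a y \<partial>lborel)"
  unfolding G_eq
proof (rule integral_cong_AE)
  show "AE y in lborel. indicator {..x} y * g_std a y = indicator {..<x} y * g_std a y"
    using AE_lborel_singleton[of x] by eventually_elim (auto simp: indicator_def)
  show "(\<lambda>y. indicator {..x} y * g_std a y) \<in> borel_measurable lborel" using apos by measurable
  show "(\<lambda>y. indicator {..<x} y * g_std a y) \<in> borel_measurable lborel" using apos by measurable
qed

definition Ah where "Ah y = (if snd y \<le> fst y then qd a y * ln (fst y) else 0)"
definition Bh where "Bh y = (if fst y < snd y then qd a y * ln (snd y) else 0)"

lemma Ah_meas[measurable]: "Ah \<in> borel_measurable NN" unfolding Ah_def using apos by measurable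
lemma Bh_meas[measurable]: "Bh \<in> borel_measurable NN" unfolding Bh_def using apos by measurable

lemma int_Ah: "integrable NN Ah"
proof (rule Bochner_Integration.integrable_bound[OF int_qabs[OF apos]])
  show "AE y in NN. norm (Ah y) \<le> norm (\<bar>qd a y * ln (fst y)\<bar> + \<bar>qd a y * ln (snd y)\<bar>)"
    by (intro AE_I2) (auto simp: Ah_def)
qed simp

lemma int_Bh: "integrable NN Bh"
proof (rule Bochner_Integration.integrable_bound[OF int_qabs[OF apos]])
  show "AE y in NN. norm (Bh y) \<le> norm (\<bar>qd a y * ln (fst y)\<bar> + \<bar>qd a y * ln (snd y)\<bar>)"
    by (intro AE_I2) (auto simp: Bh_def)
qed simp

lemma integral_Ah: "integral\<^sup>L NN Ah = (\<integral>x. g_std a x * ln x * G_std a x \<partial>lborel)"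
proof -
  have "integral\<^sup>L NN Ah = (\<integral>x. (\<integral>y. Ah (x, y) \<partial>lborel) \<partial>lborel)"
    using lborel_pair.integral_fst'[OF int_Ah] by simp
  also have "\<dots> = (\<integral>x. g_std a x * ln x * G_std a x \<partial>lborel)"
  proof (rule Bochner_Integration.integral_cong[OF refl])
    fix x :: real
    have "(\<lambda>y. Ah (x, y)) = (\<lambda>y. (g_std a x * ln x) * (indicator {..x} y * g_std a y))"
      by (auto simp: Ah_def qd_def indicator_def fun_eq_iff)
    then show "(\<integral>y. Ah (x, y) \<partial>lborel) = g_std a x * ln x * G_std a x"
      by (simp add: G_eq)
  qed
  finally show ?thesis .
qed

lemma integral_Bh: "integral\<^sup>L NN Bh = (\<integral>x. g_std a x * ln x * G_std a x \<partial>lborel)"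
proof -
  have sw: "integral\<^sup>L NN Bh = (\<integral>(x, y). Bh (y, x) \<partial>NN)"
    using lborel_pair.integral_product_swap[OF Bh_meas] by simp
  have isw: "integrable NN (\<lambda>(x, y). Bh (y, x))"
    using lborel_pair.integrable_product_swap[OF int_Bh] by simp
  have "(\<integral>(x, y). Bh (y, x) \<partial>NN) = (\<integral>x. (\<integral>y. Bh (y, x) \<partial>lborel) \<partial>lborel)"
    using lborel_pair.integral_fst'[OF isw] by simp
  also have "\<dots> = (\<integral>x. g_std a x * ln x * G_std a x \<partial>lborel)"
  proof (rule Bochner_Integration.integral_cong[OF refl])
    fix x :: real
    have "(\<lambda>y. Bh (y, x)) = (\<lambda>y. (g_std a x * ln x) * (indicator {..<x} y * g_std a y))"
      by (auto simp: Bh_def qd_def indicator_def fun_eq_iff)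
    then show "(\<integral>y. Bh (y, x) \<partial>lborel) = g_std a x * ln x * G_std a x"
      by (simp add: G_eq')
  qed
  finally show ?thesis using sw by simp
qed

lemma C2_eq: "C2 = c2 a"
proof -
  have "(\<lambda>y. qd a y * ln (max (fst y) (snd y))) = (\<lambda>y. Ah y + Bh y)"
    by (auto simp: Ah_def Bh_def max_def fun_eq_iff)
  then have "C2 = integral\<^sup>L NN Ah + integral\<^sup>L NN Bh"
    unfolding C2_def using int_Ah int_Bh by simp
  also have "\<dots> = 2 * (\<integral>x. g_std a x * ln x * G_std a x \<partial>lborel)"
    by (simp add: integral_Ah integral_Bh)
  also have "(\<integral>x. g_std a x * ln x * G_std a x \<partial>lborel) = (\<integral>z\<in>{0<..}. ln z * G_std a z * g_std a z \<partial>lborel)"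
    unfolding set_lebesgue_integral_def
    by (rule Bochner_Integration.integral_cong[OF refl]) (auto simp: indicator_def g_zero[OF apos])
  finally show ?thesis by (simp add: c2_def)
qed

lemma mf_inf:
  assumes e: "\<epsilon> > 0" shows "\<exists>t>0. mf a (t, 1) < Digamma a + \<epsilon>"
proof -
  define s where "s n y = qd a y * (Wf (real (Suc n), 1) y - ln (fst y))" for n y
  have sint: "integral\<^sup>L NN (s n) = mf a (real (Suc n), 1) - Digamma a" for n
  proof -
    have "integral\<^sup>L NN (s n) = integral\<^sup>L NN (\<lambda>y. qd a y * Wf (real (Suc n), 1) y - qd a y * ln (fst y))"
      unfolding s_def by (simp add: algebra_simps)
    also have "\<dots> = mf a (real (Suc n), 1) - Digamma a"
      using int_qW[OF apos] int_ql1[OF apos] integral_ql1[OF apos]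
      by (simp add: Submission.mf_def[OF apos])
    finally show ?thesis .
  qed
  have lim: "(\<lambda>n. integral\<^sup>L NN (s n)) \<longlonglongrightarrow> integral\<^sup>L NN (\<lambda>y. 0)"
  proof (rule integral_dominated_convergence[where w="\<lambda>y. \<bar>qd a y * ln (fst y)\<bar> + \<bar>qd a y * ln (snd y)\<bar>"])
    show "(\<lambda>y. 0::real) \<in> borel_measurable NN" by simp
    show "s n \<in> borel_measurable NN" for n unfolding s_def using apos by measurable
    show "integrable NN (\<lambda>y. \<bar>qd a y * ln (fst y)\<bar> + \<bar>qd a y * ln (snd y)\<bar>)" by (rule int_qabs[OF apos])
    show "AE y in NN. (\<lambda>n. s n y) \<longlonglongrightarrow> 0"
    proof (intro AE_I2)
      fix y :: "real \<times> real"
      show "(\<lambda>n. s n y) \<longlonglongrightarrow> 0"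
      proof (cases "fst y > 0 \<and> snd y > 0")
        case False then show ?thesis using qd_zero[OF apos False] by (simp add: s_def)
      next
        case True
        obtain N :: nat where N: "snd y / fst y < real N" using reals_Archimedean2[of "snd y / fst y"] by (elim exE)
        have "eventually (\<lambda>n. s n y = 0) sequentially"
          unfolding eventually_sequentially
        proof (intro exI allI impI)
          fix n assume "N \<le> n"
          then have "real N \<le> real (Suc n)" by simp
          with N have "snd y / fst y < real (Suc n)" by linarith
          then have "snd y < real (Suc n) * fst y" using True by (simp add: divide_less_eq)
          then show "s n y = 0" by (simp add: s_def Wf_def)
        qed
        then show ?thesis by (rule tendsto_eventually)
      qed
    qed
    show "AE y in NN. norm (s n y) \<le> \<bar>qd a y * ln (fst y)\<bar> + \<bar>qd a y * ln (snd y)\<bar>" for n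
    proof (intro AE_I2)
      fix y :: "real \<times> real"
      have q: "qd a y \<ge> 0" by (rule qd_nonneg[OF apos])
      have "\<bar>Wf (real (Suc n), 1) y - ln (fst y)\<bar> \<le> \<bar>ln (fst y)\<bar> + \<bar>ln (snd y)\<bar>"
        by (auto simp: Wf_def)
      then have "qd a y * \<bar>Wf (real (Suc n), 1) y - ln (fst y)\<bar> \<le> qd a y * (\<bar>ln (fst y)\<bar> + \<bar>ln (snd y)\<bar>)"
        by (rule mult_left_mono[OF _ q])
      then show "norm (s n y) \<le> \<bar>qd a y * ln (fst y)\<bar> + \<bar>qd a y * ln (snd y)\<bar>"
        using q by (simp add: s_def abs_mult distrib_left)
    qed
  qed
  then have "(\<lambda>n. mf a (real (Suc n), 1) - Digamma a) \<longlonglongrightarrow> 0" by (simp add: sint)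
  from LIMSEQ_D[OF this e] obtain N where "\<forall>n\<ge>N. norm (mf a (real (Suc n), 1) - Digamma a - 0) < \<epsilon>"
    by (elim exE)
  then have "\<bar>mf a (real (Suc N), 1) - Digamma a\<bar> < \<epsilon>" by simp
  then show ?thesis by (intro exI[of _ "real (Suc N)"]) auto
qed

end

lemma delta_borel: "delta c \<in> borel_measurable borel"
  using delta_meas[of c] by (simp add: lborel_prod)

context fixes a :: real assumes apos: "a > 0"
begin

lemma risk_less_iff:
  assumes th: "th \<in> Theta"
  shows "risk a th (delta c) < risk a th (delta d) \<longleftrightarrow> (d - c) * (2 * mf a th - c - d) < 0"
proof -
  have "risk a th (delta c) < risk a th (delta d) \<longleftrightarrow> Rf a th c < Rf a th d"
    using risk_Rf[OF apos th] Rf_nonneg[OF apos] by (simp add: ennreal_less_iff)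
  also have "\<dots> \<longleftrightarrow> Rf a th c - Rf a th d < 0" by simp
  also have "\<dots> \<longleftrightarrow> (d - c) * (2 * mf a th - c - d) < 0" by (simp only: Rf_diff[OF apos])
  finally show ?thesis .
qed

lemma risk_le_iff:
  assumes th: "th \<in> Theta"
  shows "risk a th (delta c) \<le> risk a th (delta d) \<longleftrightarrow> (d - c) * (2 * mf a th - c - d) \<le> 0"
proof -
  have "risk a th (delta c) \<le> risk a th (delta d) \<longleftrightarrow> Rf a th c \<le> Rf a th d"
    using risk_Rf[OF apos th] Rf_nonneg[OF apos] by (simp add: ennreal_le_iff)
  also have "\<dots> \<longleftrightarrow> Rf a th c - Rf a th d \<le> 0" by simp
  also have "\<dots> \<longleftrightarrow> (d - c) * (2 * mf a th - c - d) \<le> 0" by (simp only: Rf_diff[OF apos])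
  finally show ?thesis .
qed

lemma mf_bounds: "th \<in> Theta \<Longrightarrow> c1 a \<le> mf a th \<and> mf a th \<le> c2 a"
  using mf_lower[OF apos] mf_upper[OF apos] C2_eq[OF apos] by (simp add: c1_def)

lemma part3:
  assumes "(d < c \<and> c \<le> c1 a) \<or> (c2 a \<le> c \<and> c < d)" and th: "th \<in> Theta"
  shows "risk a th (delta c) < risk a th (delta d)"
proof -
  have m: "c1 a \<le> mf a th" "mf a th \<le> c2 a" using mf_bounds[OF th] by auto
  have "(d - c) * (2 * mf a th - c - d) < 0"
    using assms(1)
  proof
    assume h: "d < c \<and> c \<le> c1 a"
    then have "d - c < 0" "2 * mf a th - c - d > 0" using m by linarith+
    then show ?thesis by (simp add: mult_neg_pos)
  next
    assume h: "c2 a \<le> c \<and> c < d"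
    then have "d - c > 0" "2 * mf a th - c - d < 0" using m by linarith+
    then show ?thesis by (simp add: mult_pos_neg)
  qed
  then show ?thesis using risk_less_iff[OF th] by simp
qed

lemma one_Theta: "(1, 1) \<in> Theta" by (simp add: Theta_def)

lemma part2:
  assumes "c < c1 a \<or> c > c2 a"
  shows "inadmissible a (delta c)"
proof -
  define c0 where "c0 = (if c < c1 a then c1 a else c2 a)"
  have lt: "risk a th (delta c0) < risk a th (delta c)" if th: "th \<in> Theta" for th
  proof -
    have m: "c1 a \<le> mf a th" "mf a th \<le> c2 a" using mf_bounds[OF th] by auto
    have "(c - c0) * (2 * mf a th - c0 - c) < 0"
    proof (cases "c < c1 a")
      case True
      then have "c - c0 < 0" "2 * mf a th - c0 - c > 0" using m by (simp_all add: c0_def)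
      then show ?thesis by (simp add: mult_neg_pos)
    next
      case False
      then have "c > c2 a" using assms by simp
      then have "c - c0 > 0" "2 * mf a th - c0 - c < 0" using m False by (simp_all add: c0_def)
      then show ?thesis by (simp add: mult_pos_neg)
    qed
    then show ?thesis using risk_less_iff[OF th] by simp
  qed
  have "dominates a (delta c0) (delta c)"
    unfolding dominates_def using lt one_Theta by (auto intro: less_imp_le)
  then show ?thesis unfolding inadmissible_def using delta_borel[of c0] by blast
qed

lemma part1:
  assumes c: "c \<in> {c1 a..c2 a}"
  shows "admissible_within_K1 a c"
  unfolding admissible_within_K1_def
proof
  assume "\<exists>c'. dominates a (delta c') (delta c)"
  then obtain c' where D: "dominates a (delta c') (delta c)" by (elim exE)
  then have le: "\<And>th. th \<in> Theta \<Longrightarrow> risk a th (delta c') \<le> risk a th (delta c)"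
    and ex: "\<exists>th\<in>Theta. risk a th (delta c') < risk a th (delta c)"
    unfolding dominates_def by auto
  have cc: "c1 a \<le> c" "c \<le> c2 a" using c by auto
  consider "c' = c" | "c' > c" | "c' < c" by linarith
  then show False
  proof cases
    case 1 then show False using ex by simp
  next
    case 2
    define e where "e = (c' - c) / 2"
    have e: "e > 0" using 2 by (simp add: e_def)
    obtain t where t: "t > 0" "mf a (t, 1) < Digamma a + e" using mf_inf[OF apos e] by (elim exE conjE)
    have th: "(t, 1) \<in> Theta" using t by (simp add: Theta_def)
    have "mf a (t, 1) < c + e" using t cc by (simp add: c1_def)
    then have "2 * mf a (t, 1) < c + c'" unfolding e_def by (simp add: field_simps)
    then have "2 * mf a (t, 1) - c' - c < 0" by linarith
    moreover have "c - c' < 0" using 2 by simp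
    ultimately have "(c - c') * (2 * mf a (t, 1) - c' - c) > 0" by (simp add: mult_neg_neg)
    then show False using le[OF th] risk_le_iff[OF th, of c' c] by simp
  next
    case 3
    have m: "mf a (1, 1) = c2 a" using mf_11[OF apos] C2_eq[OF apos] by simp
    have "2 * mf a (1, 1) - c' - c > 0" using m cc 3 by linarith
    moreover have "c - c' > 0" using 3 by simp
    ultimately have "(c - c') * (2 * mf a (1, 1) - c' - c) > 0" by simp
    then show False using le[OF one_Theta] risk_le_iff[OF one_Theta, of c' c] by simp
  qed
qed

end

theorem theorem2p1:
  fixes \<alpha> :: real
  assumes "\<alpha> > 0"
  shows "(\<forall>c\<in>{c1 \<alpha>..c2 \<alpha>}. admissible_within_K1 \<alpha> c)
       \<and> (\<forall>c. (c < c1 \<alpha> \<or> c > c2 \<alpha>) \<longrightarrow> inadmissible \<alpha> (delta c))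
       \<and> (\<forall>c d. ((d < c \<and> c \<le> c1 \<alpha>) \<or> (c2 \<alpha> \<le> c \<and> c < d)) \<longrightarrow>
              (\<forall>th\<in>Theta. risk \<alpha> th (delta c) < risk \<alpha> th (delta d)))"
  using part1[OF assms] part2[OF assms] part3[OF assms] by blast

end
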